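(* Let $\Gamma$ be a finite simplicial graph with vertex set $V=\{a_0,\ldots,a_{n-1}\}$, let $M$ be a positive integer and $\sigma:B(M)\to A(\Gamma)$ the map defined in the context. For all $u,v\in V$ and $x,y\in B(M)$: (1) $xy^{-1}\in Z(u)$ if and only if $\sigma(x)\sigma(y)^{-1}\in Z(u)$; (2) $xy^{-1}\in Z(v)Z(u)$ if and only if $\sigma(x)\sigma(y)^{-1}\in Z(v)Z(u)$.
   Context: $A(\Gamma)=\langle V\mid[a,b]=1\text{ for }\{a,b\}\in E(\Gamma)\rangle$; $\|w\|$ is the word length with respect to $V$, and $B(M)=\{w\in A(\Gamma):\|w\|\le M\}$. For $v\in V$, $Z(v)=\langle\mathrm{st}_\Gamma(v)\rangle$, the subgroup generated by $v$ and its neighbours, and $Z(v)Z(u)=\{gh:g\in Z(v),h\in Z(u)\}$. For a word $s_1^{e_1}\cdots s_\ell^{e_\ell}$ ($s_i\in V$, $e_i\in\{\pm1\}$, $\ell=\|w\|$) representing $w\in B(M)$, its right-counting vector $(f_1,\ldots,f_\ell)$ has $f_i=\min\|y\|$ over $y\in A(\Gamma)$ with $s_i^{e_i}\cdots s_\ell^{e_\ell}=x\,s_i^{e_i}\,y$ for some $x\in\langle\mathrm{lk}_\Gamma(s_i)\rangle$ ($\mathrm{lk}_\Gamma(s)$ = vertices adjacent to $s$). Set $N_i=\frac{3e_i-1}{2}\cdot4^{M-1-f_i}$ and $\sigma(w)=s_1^{N_1}\cdots s_\ell^{N_\ell}$; this is independent of the chosen word of length $\|w\|$ representing $w$. *)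

theory Defs
  imports Main
begin

text \<open>Right-angled Artin group A(Gamma) for a finite simplicial graph with vertex set the
finite type 'v and symmetric irreflexive edge relation E.  Group elements are represented by
words over letters (s, b) where b = True means s^1 and b = False means s^-1; two words
represent the same element iff they are related by req E.\<close>

type_synonym 'v letter = "'v \<times> bool"

inductive rstep :: "('v \<Rightarrow> 'v \<Rightarrow> bool) \<Rightarrow> 'v letter list \<Rightarrow> 'v letter list \<Rightarrow> bool"
  for E where
  cancel: "rstep E (xs @ [(a, b), (a, \<not> b)] @ ys) (xs @ ys)"
| comm: "E a c \<Longrightarrow> rstep E (xs @ [(a, b), (c, d)] @ ys) (xs @ [(c, d), (a, b)] @ ys)"

definition req :: "('v \<Rightarrow> 'v \<Rightarrow> bool) \<Rightarrow> 'v letter list \<Rightarrow> 'v letter list \<Rightarrow> bool" where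
  "req E = equivclp (rstep E)"

definition winv :: "'v letter list \<Rightarrow> 'v letter list" where
  "winv w = rev (map (\<lambda>(s, b). (s, \<not> b)) w)"

definition rnorm :: "('v \<Rightarrow> 'v \<Rightarrow> bool) \<Rightarrow> 'v letter list \<Rightarrow> nat" where
  "rnorm E w = (LEAST n. \<exists>w'. length w' = n \<and> req E w' w)"

definition inZ :: "('v \<Rightarrow> 'v \<Rightarrow> bool) \<Rightarrow> 'v \<Rightarrow> 'v letter list \<Rightarrow> bool" where
  "inZ E v w = (\<exists>g. (\<forall>l\<in>set g. fst l = v \<or> E v (fst l)) \<and> req E w g)"

definition inZZ :: "('v \<Rightarrow> 'v \<Rightarrow> bool) \<Rightarrow> 'v \<Rightarrow> 'v \<Rightarrow> 'v letter list \<Rightarrow> bool" where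
  "inZZ E v u w = (\<exists>g h. (\<forall>l\<in>set g. fst l = v \<or> E v (fst l)) \<and>
                         (\<forall>l\<in>set h. fst l = u \<or> E u (fst l)) \<and> req E w (g @ h))"

definition rpow :: "'v \<Rightarrow> int \<Rightarrow> 'v letter list" where
  "rpow s N = replicate (nat \<bar>N\<bar>) (s, N \<ge> 0)"

definition lexp :: "'v letter \<Rightarrow> int" where
  "lexp l = (if snd l then 1 else -1)"

text \<open>Right-counting vector entry f_i (0-based index i) of a word w.\<close>
definition rcount :: "('v \<Rightarrow> 'v \<Rightarrow> bool) \<Rightarrow> 'v letter list \<Rightarrow> nat \<Rightarrow> nat" where
  "rcount E w i = (LEAST n. \<exists>x y. (\<forall>l\<in>set x. E (fst (w ! i)) (fst l)) \<and>
                      req E (drop i w) (x @ [w ! i] @ y) \<and> rnorm E y = n)"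

definition sigma_word :: "('v \<Rightarrow> 'v \<Rightarrow> bool) \<Rightarrow> nat \<Rightarrow> 'v letter list \<Rightarrow> 'v letter list" where
  "sigma_word E M w = concat (map (\<lambda>i. rpow (fst (w ! i))
       (((3 * lexp (w ! i) - 1) div 2) * 4 ^ (M - 1 - rcount E w i))) [0..<length w])"

definition sigma :: "('v \<Rightarrow> 'v \<Rightarrow> bool) \<Rightarrow> nat \<Rightarrow> 'v letter list \<Rightarrow> 'v letter list" where
  "sigma E M w = sigma_word E M (SOME w'. req E w' w \<and> length w' = rnorm E w)"

end

theory Submission
  imports Defs
begin


definition linv :: "'v letter \<Rightarrow> 'v letter" where "linv l = (fst l, \<not> snd l)"

lemma linv_linv[simp]: "linv (linv l) = l" by (simp add: linv_def)
lemma fst_linv[simp]: "fst (linv l) = fst l" by (simp add: linv_def)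
lemma linv_neq[simp]: "linv l \<noteq> l" "l \<noteq> linv l" by (auto simp: linv_def prod_eq_iff)

lemma winv_Nil[simp]: "winv [] = []" by (simp add: winv_def)
lemma winv_Cons[simp]: "winv (l # w) = winv w @ [linv l]"
  by (simp add: winv_def linv_def split: prod.splits)
lemma winv_append[simp]: "winv (a @ b) = winv b @ winv a" by (simp add: winv_def)
lemma winv_winv[simp]: "winv (winv w) = w" by (induct w) (auto simp: winv_def)
lemma set_winv: "set (winv w) = linv ` set w" by (induct w) auto

lemma rstep_ctx: "rstep E a b \<Longrightarrow> rstep E (p @ a @ q) (p @ b @ q)"
proof (induct rule: rstep.induct)
  case (cancel xs a b ys) thus ?case using rstep.cancel[of E "p@xs" a b "ys@q"] by simp
next
  case (comm a c xs b d ys) thus ?case using rstep.comm[of E a c "p@xs" b d "ys@q"] by simp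
qed

lemma req_refl[simp]: "req E w w" by (simp add: req_def)
lemma req_sym: "req E a b \<Longrightarrow> req E b a" by (simp add: req_def equivclp_sym)
lemma req_trans[trans]: "req E a b \<Longrightarrow> req E b c \<Longrightarrow> req E a c"
  unfolding req_def by (rule equivclp_trans)
lemma rstep_req: "rstep E a b \<Longrightarrow> req E a b" by (simp add: req_def r_into_equivclp)

lemma req_ctx: "req E a b \<Longrightarrow> req E (p @ a @ q) (p @ b @ q)"
  unfolding req_def
proof (induct rule: equivclp_induct)
  case base thus ?case by simp
next
  case (step y z)
  from step(2) have "rstep E (p @ y @ q) (p @ z @ q) \<or> rstep E (p @ z @ q) (p @ y @ q)"
    by (auto simp: symclp_def intro: rstep_ctx)
  with step(3) show ?case by (rule equivclp_into_equivclp)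
qed

lemma req_app: "req E a b \<Longrightarrow> req E c d \<Longrightarrow> req E (a @ c) (b @ d)"
  using req_ctx[of E a b "[]" c] req_ctx[of E c d b "[]"] by (auto intro: req_trans)

lemma req_cons: "req E a b \<Longrightarrow> req E (l # a) (l # b)"
  using req_ctx[of E a b "[l]" "[]"] by simp

lemma req_cancel: "req E (l # linv l # w) w"
  using rstep_req[OF rstep.cancel[of E "[]" "fst l" "snd l" w]] by (simp add: linv_def)

lemma req_cancel': "req E (linv l # l # w) w"
  using req_cancel[of E "linv l"] by simp

lemma req_winv_right: "req E (w @ winv w) []"
proof (induct w)
  case (Cons l w)
  have "req E (l # w @ winv w @ [linv l]) (l # [] @ [linv l])"
    using req_ctx[OF Cons, of "[l]" "[linv l]"] by simp
  also have "req E (l # [] @ [linv l]) []" using req_cancel[of E l "[]"] by simp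
  finally show ?case by simp
qed simp

lemma req_winv_left: "req E (winv w @ w) []"
  using req_winv_right[of E "winv w"] by simp

lemma rstep_winv:
  assumes sym: "\<forall>a b. E a b \<longrightarrow> E b a"
  shows "rstep E a b \<Longrightarrow> rstep E (winv a) (winv b)"
proof (induct rule: rstep.induct)
  case (cancel xs a b ys) thus ?case
    using rstep.cancel[of E "winv ys" a b "winv xs"] by (simp add: linv_def)
next
  case (comm a c xs b d ys) thus ?case
    using rstep.comm[of E c a "winv ys" "\<not>d" "\<not>b" "winv xs"] sym by (simp add: linv_def)
qed

lemma req_winv:
  assumes sym: "\<forall>a b. E a b \<longrightarrow> E b a"
  shows "req E a b \<Longrightarrow> req E (winv a) (winv b)"
  unfolding req_def
proof (induct rule: equivclp_induct)
  case base thus ?case by simp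
next
  case (step y z)
  from step(2) have "rstep E (winv y) (winv z) \<or> rstep E (winv z) (winv y)"
    by (auto simp: symclp_def intro: rstep_winv[OF sym])
  with step(3) show ?case by (rule equivclp_into_equivclp)
qed



definition prj :: "'v \<Rightarrow> 'v \<Rightarrow> 'v letter list \<Rightarrow> 'v letter list" where
  "prj p q w = filter (\<lambda>l. fst l = p \<or> fst l = q) w"

definition ceq :: "('v \<Rightarrow> 'v \<Rightarrow> bool) \<Rightarrow> 'v letter list \<Rightarrow> 'v letter list \<Rightarrow> bool" where
  "ceq E a b = (\<forall>p q. \<not> E p q \<longrightarrow> prj p q a = prj p q b)"

definition front :: "('v \<Rightarrow> 'v \<Rightarrow> bool) \<Rightarrow> 'v letter \<Rightarrow> 'v letter list \<Rightarrow> bool" where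
  "front E l r = (\<exists>p s. r = p @ l # s \<and> (\<forall>y\<in>set p. E (fst l) (fst y)))"

definition push :: "('v \<Rightarrow> 'v \<Rightarrow> bool) \<Rightarrow> 'v letter \<Rightarrow> 'v letter list \<Rightarrow> 'v letter list" where
  "push E l r = (if front E (linv l) r then remove1 (linv l) r else l # r)"

definition nf :: "('v \<Rightarrow> 'v \<Rightarrow> bool) \<Rightarrow> 'v letter list \<Rightarrow> 'v letter list" where
  "nf E w = foldr (push E) w []"

fun red :: "('v \<Rightarrow> 'v \<Rightarrow> bool) \<Rightarrow> 'v letter list \<Rightarrow> bool" where
  "red E [] = True"
| "red E (l # r) = (\<not> front E (linv l) r \<and> red E r)"

inductive swp :: "('v \<Rightarrow> 'v \<Rightarrow> bool) \<Rightarrow> 'v letter list \<Rightarrow> 'v letter list \<Rightarrow> bool" for E where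
  "E (fst a) (fst c) \<Longrightarrow> swp E (xs @ [a, c] @ ys) (xs @ [c, a] @ ys)"

abbreviation cs where "cs E \<equiv> (swp E)\<^sup>*\<^sup>*"

lemma ceq_refl[simp]: "ceq E a a" by (simp add: ceq_def)
lemma ceq_sym: "ceq E a b \<Longrightarrow> ceq E b a" by (simp add: ceq_def)
lemma ceq_trans: "ceq E a b \<Longrightarrow> ceq E b c \<Longrightarrow> ceq E a c" by (simp add: ceq_def)
lemma ceq_app: "ceq E a b \<Longrightarrow> ceq E c d \<Longrightarrow> ceq E (a @ c) (b @ d)"
  by (simp add: ceq_def prj_def)
lemma ceq_cons: "ceq E a b \<Longrightarrow> ceq E (l # a) (l # b)"
  using ceq_app[of E "[l]" "[l]" a b] by simp

lemma swp_ctx: "swp E a b \<Longrightarrow> swp E (p @ a @ q) (p @ b @ q)"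
proof (induct rule: swp.induct)
  case (1 a c xs ys) thus ?case using swp.intros[of E a c "p@xs" "ys@q"] by simp
qed

lemma cs_ctx: "cs E a b \<Longrightarrow> cs E (p @ a @ q) (p @ b @ q)"
proof (induct rule: rtranclp_induct)
  case (step y z) thus ?case by (meson rtranclp.rtrancl_into_rtrancl swp_ctx)
qed simp

lemma cs_app: "cs E a b \<Longrightarrow> cs E c d \<Longrightarrow> cs E (a @ c) (b @ d)"
  using cs_ctx[of E a b "[]" c] cs_ctx[of E c d b "[]"] by auto

lemma cs_cons: "cs E a b \<Longrightarrow> cs E (l # a) (l # b)"
  using cs_ctx[of E a b "[l]" "[]"] by simp

lemma swp_req: "swp E a b \<Longrightarrow> req E a b"
proof (induct rule: swp.induct)
  case (1 a c xs ys) thus ?case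
    using rstep_req[OF rstep.comm[of E "fst a" "fst c" xs "snd a" "snd c" ys]] by simp
qed

lemma cs_req: "cs E a b \<Longrightarrow> req E a b"
proof (induct rule: rtranclp_induct)
  case (step y z) thus ?case using swp_req req_trans by blast
qed simp

lemma swp_length: "swp E a b \<Longrightarrow> length a = length b"
  by (induct rule: swp.induct) auto

lemma swp_set: "swp E a b \<Longrightarrow> set a = set b"
  by (induct rule: swp.induct) auto

lemma cs_length: "cs E a b \<Longrightarrow> length a = length b"
  by (induct rule: rtranclp_induct) (auto dest: swp_length)

lemma cs_set: "cs E a b \<Longrightarrow> set a = set b"
  by (induct rule: rtranclp_induct) (auto dest: swp_set)

lemma cs_moveR: "\<forall>y\<in>set p. E (fst l) (fst y) \<Longrightarrow> cs E (l # p) (p @ [l])"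
proof (induct p)
  case (Cons y p)
  have "swp E ([] @ [l, y] @ p) ([] @ [y, l] @ p)" using Cons.prems by (intro swp.intros) auto
  hence "cs E (l # y # p) (y # l # p)" by simp
  also have "cs E (y # l # p) (y # p @ [l])" using Cons by (auto intro: cs_cons)
  finally show ?case by simp
qed simp

locale raag =
  fixes E :: "'v \<Rightarrow> 'v \<Rightarrow> bool"
  assumes sym: "E a b \<Longrightarrow> E b a" and irr: "\<not> E a a"
begin

lemma swp_sym: "swp E a b \<Longrightarrow> swp E b a"
proof (induct rule: swp.induct)
  case (1 a c xs ys) show ?case by (rule swp.intros) (rule sym, fact)
qed

lemma cs_sym: "cs E a b \<Longrightarrow> cs E b a"
  by (induct rule: rtranclp_induct) (auto intro: swp_sym converse_rtranclp_into_rtranclp)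

lemma cs_moveL: "\<forall>y\<in>set p. E (fst l) (fst y) \<Longrightarrow> cs E (p @ [l]) (l # p)"
  using cs_moveR cs_sym by blast

lemma cs_move: "\<forall>y\<in>set p. E (fst l) (fst y) \<Longrightarrow> cs E (a @ l # p @ b) (a @ p @ l # b)"
proof -
  assume "\<forall>y\<in>set p. E (fst l) (fst y)"
  hence "cs E (l # p) (p @ [l])" by (rule cs_moveR)
  from cs_ctx[OF this, of a b] show ?thesis by simp
qed

lemma front_prj: "front E l r \<longleftrightarrow> (\<forall>b. \<not> E (fst l) b \<longrightarrow> (\<exists>t. prj (fst l) b r = l # t))"
proof
  assume "front E l r"
  then obtain p s where r: "r = p @ l # s" and p: "\<forall>y\<in>set p. E (fst l) (fst y)"
    unfolding front_def by blast
  show "\<forall>b. \<not> E (fst l) b \<longrightarrow> (\<exists>t. prj (fst l) b r = l # t)"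
  proof (intro allI impI)
    fix b assume "\<not> E (fst l) b"
    hence "prj (fst l) b p = []" using p irr unfolding prj_def by (auto simp: filter_empty_conv)
    thus "\<exists>t. prj (fst l) b r = l # t" by (simp add: r prj_def)
  qed
next
  assume H: "\<forall>b. \<not> E (fst l) b \<longrightarrow> (\<exists>t. prj (fst l) b r = l # t)"
  then obtain t where "prj (fst l) (fst l) r = l # t" using irr by blast
  hence "l \<in> set r" unfolding prj_def by (metis filter_is_subset list.set_intros(1) subsetD)
  hence "\<exists>y\<in>set r. \<not> E (fst l) (fst y)" using irr by blast
  then obtain p y s where r: "r = p @ y # s" and p: "\<forall>z\<in>set p. \<not> \<not> E (fst l) (fst z)"
      and y: "\<not> E (fst l) (fst y)"
    using split_list_first_prop[of r "\<lambda>y. \<not> E (fst l) (fst y)"] by blast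
  have "prj (fst l) (fst y) p = []" unfolding prj_def filter_empty_conv
  proof
    fix z assume "z \<in> set p"
    hence "E (fst l) (fst z)" using p by blast
    thus "\<not> (fst z = fst l \<or> fst z = fst y)" using y irr by metis
  qed
  hence "prj (fst l) (fst y) r = y # prj (fst l) (fst y) s" by (simp add: r prj_def)
  with H y have "y = l" by auto
  with r p show "front E l r" unfolding front_def by auto
qed

lemma front_ceq: "ceq E a b \<Longrightarrow> front E l a \<Longrightarrow> front E l b"
  unfolding front_prj ceq_def by metis

lemma ceq_Nil: "ceq E [] b \<Longrightarrow> b = []"
proof (cases b)
  case (Cons y b')
  assume "ceq E [] b"
  hence "prj (fst y) (fst y) [] = prj (fst y) (fst y) b" unfolding ceq_def using irr by blast
  thus ?thesis using Cons by (simp add: prj_def)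
qed simp

lemma ceq_cs: "ceq E a b \<Longrightarrow> cs E a b"
proof (induct a arbitrary: b)
  case Nil thus ?case using ceq_Nil by auto
next
  case (Cons l a)
  have "front E l (l # a)" unfolding front_def by force
  hence "front E l b" using Cons.prems front_ceq by blast
  then obtain p s where b: "b = p @ l # s" and p: "\<forall>y\<in>set p. E (fst l) (fst y)"
    unfolding front_def by blast
  have "ceq E a (p @ s)" unfolding ceq_def
  proof (intro allI impI)
    fix x z assume xz: "\<not> E x z"
    have eq: "prj x z (l # a) = prj x z b" using Cons.prems xz unfolding ceq_def by blast
    show "prj x z a = prj x z (p @ s)"
    proof (cases "fst l = x \<or> fst l = z")
      case True
      have "prj x z p = []" unfolding prj_def filter_empty_conv
      proof
        fix y assume y: "y \<in> set p"
        hence "E (fst l) (fst y)" using p by blast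
        thus "\<not> (fst y = x \<or> fst y = z)" using True xz irr sym by metis
      qed
      thus ?thesis using eq True unfolding b by (auto simp: prj_def)
    next
      case False
      thus ?thesis using eq unfolding b by (auto simp: prj_def)
    qed
  qed
  hence "cs E a (p @ s)" using Cons.hyps by blast
  hence "cs E (l # a) (l # p @ s)" by (rule cs_cons)
  also have "cs E (l # p @ s) (p @ l # s)" using cs_move[OF p, of "[]" s] by simp
  finally show ?case using b by simp
qed

lemma ceq_req: "ceq E a b \<Longrightarrow> req E a b" using ceq_cs cs_req by blast
lemma ceq_length: "ceq E a b \<Longrightarrow> length a = length b" using ceq_cs cs_length by blast
lemma ceq_set: "ceq E a b \<Longrightarrow> set a = set b" using ceq_cs cs_set by blast

lemma swp_ceq: "swp E a b \<Longrightarrow> ceq E a b"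
proof (induct rule: swp.induct)
  case (1 a c xs ys)
  have "fst a \<noteq> fst c" using 1 irr by metis
  { fix p q assume "\<not> E p q"
    hence "\<not> ((fst a = p \<or> fst a = q) \<and> (fst c = p \<or> fst c = q))" using 1 irr sym by metis
    hence "prj p q (xs @ [a, c] @ ys) = prj p q (xs @ [c, a] @ ys)" by (auto simp: prj_def) }
  thus ?case unfolding ceq_def by blast
qed

lemma cs_ceq: "cs E a b \<Longrightarrow> ceq E a b"
  by (induct rule: rtranclp_induct) (auto dest: swp_ceq intro: ceq_trans)

end


context raag begin

lemma front_Cons_same[simp]: "front E m (m # r)"
  unfolding front_def by (rule exI[of _ "[]"]) auto

lemma front_remove1:
  assumes "r = p @ l # s" "\<forall>y\<in>set p. E (fst l) (fst y)"
  shows "remove1 l r = p @ s"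
proof -
  have "l \<notin> set p" using assms(2) irr by blast
  thus ?thesis using assms(1) by (simp add: remove1_append)
qed

lemma prj_remove1:
  "prj p q (remove1 x r) = (if fst x = p \<or> fst x = q then remove1 x (prj p q r) else prj p q r)"
  by (induct r) (auto simp: prj_def)

lemma front_ceq_iff: "ceq E a b \<Longrightarrow> front E l a \<longleftrightarrow> front E l b"
  using front_ceq ceq_sym by blast

lemma push_ceq: assumes "ceq E a b" shows "ceq E (push E l a) (push E l b)"
proof (cases "front E (linv l) a")
  case True
  hence "front E (linv l) b" using front_ceq_iff[OF assms] by blast
  thus ?thesis using True assms unfolding push_def ceq_def by (simp add: prj_remove1)
next
  case False
  hence "\<not> front E (linv l) b" using front_ceq_iff[OF assms] by blast
  thus ?thesis using False assms unfolding push_def by (simp add: ceq_cons)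
qed

lemma foldr_push_ceq: "ceq E a b \<Longrightarrow> ceq E (foldr (push E) xs a) (foldr (push E) xs b)"
  by (induct xs) (auto intro: push_ceq)

lemma prj_comm: "prj p q r = prj q p r" unfolding prj_def by meson

lemma prj_push:
  assumes "\<not> E p q"
  shows "prj p q (push E l r) = (if fst l = p \<or> fst l = q then
           (if front E (linv l) r then tl (prj p q r) else l # prj p q r) else prj p q r)"
proof (cases "front E (linv l) r")
  case True
  show ?thesis
  proof (cases "fst l = p \<or> fst l = q")
    case True2: True
    have "\<exists>t. prj p q r = linv l # t"
    proof (cases "fst l = p")
      case True3: True
      thus ?thesis using True assms unfolding front_prj by auto
    next
      case False
      hence "fst l = q" using True2 by blast
      moreover have "\<not> E q p" using assms sym by blast
      ultimately show ?thesis using True unfolding front_prj by (auto simp: prj_comm[of p q])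
    qed
    then obtain t where "prj p q r = linv l # t" by blast
    thus ?thesis using True True2 by (simp add: push_def prj_remove1)
  next
    case False
    thus ?thesis using True by (simp add: push_def prj_remove1)
  qed
next
  case False
  thus ?thesis by (auto simp: push_def prj_def)
qed

lemma front_push_other:
  assumes "E (fst a) (fst m)"
  shows "front E m (push E a r) \<longleftrightarrow> front E m r"
proof -
  have "fst a \<noteq> fst m" using assms irr by metis
  { fix b assume b: "\<not> E (fst m) b"
    hence "fst a \<noteq> b" using assms sym by metis
    hence "prj (fst m) b (push E a r) = prj (fst m) b r"
      using prj_push[OF b, of a r] \<open>fst a \<noteq> fst m\<close> by auto }
  thus ?thesis unfolding front_prj by auto
qed

lemma push_comm:
  assumes "E (fst a) (fst c)"
  shows "ceq E (push E a (push E c r)) (push E c (push E a r))"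
  unfolding ceq_def
proof (intro allI impI)
  fix p q assume pq: "\<not> E p q"
  have ac: "fst a \<noteq> fst c" using assms irr by metis
  have n: "\<not> ((fst a = p \<or> fst a = q) \<and> (fst c = p \<or> fst c = q))" using assms pq sym ac by metis
  have f1: "front E (linv a) (push E c r) \<longleftrightarrow> front E (linv a) r"
    using front_push_other[of c "linv a" r] assms sym by simp
  have f2: "front E (linv c) (push E a r) \<longleftrightarrow> front E (linv c) r"
    using front_push_other[of a "linv c" r] assms by simp
  show "prj p q (push E a (push E c r)) = prj p q (push E c (push E a r))"
  proof (cases "fst a = p \<or> fst a = q")
    case True
    hence "\<not> (fst c = p \<or> fst c = q)" using n by blast
    thus ?thesis using True f1 f2 by (simp add: prj_push[OF pq])
  next
    case False
    thus ?thesis using f1 f2 by (simp add: prj_push[OF pq])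
  qed
qed

lemma front_insert:
  assumes "front E m (p @ s)" "E (fst m) (fst x)"
  shows "front E m (p @ x # s)"
proof -
  obtain q t where qt: "p @ s = q @ m # t" and q: "\<forall>y\<in>set q. E (fst m) (fst y)"
    using assms(1) unfolding front_def by blast
  have "(\<exists>us. p = q @ us \<and> us @ s = m # t) \<or> (\<exists>us. q = p @ us \<and> s = us @ m # t)"
    using qt by (auto simp: append_eq_append_conv2)
  thus ?thesis
  proof (elim disjE exE conjE)
    fix us assume us: "p = q @ us" "us @ s = m # t"
    show ?thesis
    proof (cases us)
      case Nil
      hence "p @ x # s = (q @ [x]) @ m # t" using us by simp
      thus ?thesis using q assms(2) unfolding front_def by fastforce
    next
      case (Cons u us')
      hence "p @ x # s = q @ m # (us' @ x # s)" using us by simp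
      thus ?thesis using q unfolding front_def by blast
    qed
  next
    fix us assume us: "q = p @ us" "s = us @ m # t"
    hence "p @ x # s = (p @ x # us) @ m # t" by simp
    thus ?thesis using q us assms(2) unfolding front_def by fastforce
  qed
qed

lemma red_remove:
  "red E (p @ x # s) \<Longrightarrow> \<forall>y\<in>set p. E (fst x) (fst y) \<Longrightarrow> red E (p @ s)"
proof (induct p)
  case (Cons y p)
  have "E (fst (linv y)) (fst x)" using Cons.prems sym by auto
  thus ?case using Cons front_insert[of "linv y" p s x] by auto
qed simp

lemma red_push: "red E r \<Longrightarrow> red E (push E l r)"
proof (cases "front E (linv l) r")
  case True
  then obtain p s where "r = p @ linv l # s" "\<forall>y\<in>set p. E (fst (linv l)) (fst y)"
    unfolding front_def by blast
  moreover assume "red E r"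
  ultimately show ?thesis using True red_remove front_remove1[of r p "linv l" s] by (simp add: push_def)
qed (simp add: push_def)

lemma red_nf: "red E (nf E w)"
  unfolding nf_def by (induct w) (auto intro: red_push)

lemma nf_Cons: "nf E (l # w) = push E l (nf E w)" by (simp add: nf_def)
lemma nf_append: "nf E (a @ b) = foldr (push E) a (nf E b)" by (simp add: nf_def)

lemma red_suffix: "red E (a @ b) \<Longrightarrow> red E b" by (induct a) auto

lemma push_cancel: "red E r \<Longrightarrow> ceq E (push E l (push E (linv l) r)) r"
proof (cases "front E l r")
  case True
  then obtain p s where r: "r = p @ l # s" and p: "\<forall>y\<in>set p. E (fst l) (fst y)"
    unfolding front_def by blast
  assume red: "red E r"
  have r1: "push E (linv l) r = p @ s" using True front_remove1[OF r p] by (simp add: push_def)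
  have "\<not> front E (linv l) (p @ s)"
  proof
    assume "front E (linv l) (p @ s)"
    then obtain p' s' where ps: "p @ s = p' @ linv l # s'" and p': "\<forall>y\<in>set p'. E (fst l) (fst y)"
      unfolding front_def by auto
    have "linv l \<notin> set p" using p irr by fastforce
    then obtain s1 where s1: "s = s1 @ linv l # s'" "p' = p @ s1"
      using ps by (auto simp: append_eq_append_conv2 append_eq_Cons_conv)
    have "red E (p @ (l # s1 @ linv l # s'))" using red r s1 by simp
    hence "red E (l # s1 @ linv l # s')" by (rule red_suffix)
    moreover have "front E (linv l) (s1 @ linv l # s')" using p' s1 unfolding front_def by auto
    ultimately show False by simp
  qed
  hence "push E l (push E (linv l) r) = l # p @ s" using r1 by (simp add: push_def)
  also have "ceq E \<dots> r" unfolding r using cs_move[OF p, of "[]" s] cs_ceq by simp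
  finally show ?thesis .
next
  case False
  hence "push E (linv l) r = linv l # r" by (simp add: push_def)
  moreover have "remove1 (linv l) (linv l # r) = r" by simp
  ultimately show ?thesis by (simp add: push_def)
qed

end


context raag begin

lemma rstep_nf: "rstep E a b \<Longrightarrow> ceq E (nf E a) (nf E b)"
proof (induct rule: rstep.induct)
  case (cancel xs a b ys)
  have "ceq E (push E (a, b) (push E (linv (a, b)) (nf E ys))) (nf E ys)"
    by (rule push_cancel) (rule red_nf)
  hence "ceq E (foldr (push E) xs (push E (a, b) (push E (linv (a, b)) (nf E ys))))
                (foldr (push E) xs (nf E ys))" by (rule foldr_push_ceq)
  thus ?case by (simp add: nf_append nf_Cons linv_def)
next
  case (comm a c xs b d ys)
  have "ceq E (push E (a, b) (push E (c, d) (nf E ys))) (push E (c, d) (push E (a, b) (nf E ys)))"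
    using push_comm[of "(a, b)" "(c, d)"] comm by simp
  hence "ceq E (foldr (push E) xs (push E (a, b) (push E (c, d) (nf E ys))))
                (foldr (push E) xs (push E (c, d) (push E (a, b) (nf E ys))))" by (rule foldr_push_ceq)
  thus ?case by (simp add: nf_append nf_Cons)
qed

lemma req_nf: "req E a b \<Longrightarrow> ceq E (nf E a) (nf E b)"
  unfolding req_def
proof (induct rule: equivclp_induct)
  case (step y z)
  thus ?case using rstep_nf ceq_trans ceq_sym by (metis symclp_def)
qed simp

lemma push_req: "req E (push E l r) (l # r)"
proof (cases "front E (linv l) r")
  case True
  then obtain p s where r: "r = p @ linv l # s" and p: "\<forall>y\<in>set p. E (fst l) (fst y)"
    unfolding front_def by auto
  have "push E l r = p @ s" using True front_remove1[of r p "linv l" s] r p by (simp add: push_def)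
  also have "req E (p @ s) (p @ [l, linv l] @ s)" using req_ctx[OF req_cancel[of E l "[]"], of p s]
    by (simp add: req_sym)
  also have "req E \<dots> (l # r)" using cs_req[OF cs_moveL[OF p]] req_ctx[of E "p @ [l]" "l # p" "[]" "linv l # s"] r
    by (simp add: req_sym)
  finally show ?thesis .
qed (simp add: push_def)

lemma nf_req: "req E (nf E w) w"
proof (induct w)
  case (Cons l w)
  have "req E (nf E (l # w)) (l # nf E w)" by (simp add: nf_Cons push_req)
  also have "req E \<dots> (l # w)" using Cons by (rule req_cons)
  finally show ?case .
qed (simp add: nf_def)

lemma red_ceq_nf: "red E w \<Longrightarrow> ceq E (nf E w) w"
proof (induct w)
  case (Cons l w)
  hence "ceq E (push E l (nf E w)) (push E l w)" by (auto intro: push_ceq)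
  moreover have "push E l w = l # w" using Cons.prems by (simp add: push_def)
  ultimately show ?case by (simp add: nf_Cons)
qed (simp add: nf_def)

lemma length_push: "length (push E l r) = (if front E (linv l) r then length r - 1 else Suc (length r))"
  unfolding push_def front_def by (auto simp: length_remove1)

lemma front_len: "front E l r \<Longrightarrow> length r > 0" unfolding front_def by auto

lemma nf_len_le: "length (nf E w) \<le> length w"
  by (induct w) (auto simp: nf_Cons nf_def[of E "[]"] length_push)

lemma nf_len_red: "length (nf E w) = length w \<Longrightarrow> red E w"
proof (induct w)
  case (Cons l w)
  have le: "length (nf E w) \<le> length w" by (rule nf_len_le)
  have A: "\<not> front E (linv l) (nf E w) \<and> length (nf E w) = length w"
    using Cons.prems le by (auto simp: nf_Cons length_push split: if_splits)
  hence "red E w" using Cons.hyps by blast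
  hence "ceq E (nf E w) w" by (rule red_ceq_nf)
  hence "\<not> front E (linv l) w" using A front_ceq_iff by blast
  thus ?case using \<open>red E w\<close> by simp
qed simp

lemma rnorm_nf: "rnorm E w = length (nf E w)"
  unfolding rnorm_def
proof (rule Least_equality)
  show "\<exists>w'. length w' = length (nf E w) \<and> req E w' w" using nf_req by blast
next
  fix n assume "\<exists>w'. length w' = n \<and> req E w' w"
  then obtain w' where "length w' = n" "req E w' w" by blast
  hence "ceq E (nf E w') (nf E w)" using req_nf by blast
  hence "length (nf E w) = length (nf E w')" using ceq_length by (metis)
  thus "length (nf E w) \<le> n" using nf_len_le[of w'] \<open>length w' = n\<close> by simp
qed

lemma red_iff: "red E w \<longleftrightarrow> rnorm E w = length w"
  using red_ceq_nf nf_len_red ceq_length rnorm_nf by metis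

lemma red_cs: "cs E a b \<Longrightarrow> red E a \<Longrightarrow> red E b"
proof -
  assume c: "cs E a b" and r: "red E a"
  have "ceq E (nf E a) (nf E b)" using req_nf cs_req c by blast
  hence "length (nf E a) = length (nf E b)" using ceq_length by blast
  thus "red E b" using r c cs_length red_iff rnorm_nf by metis
qed

lemma rnorm_winv: "rnorm E (winv w) = rnorm E w"
proof -
  have *: "rnorm E (winv w) \<le> rnorm E w" for w
  proof -
    have "req E (winv (nf E w)) (winv w)" using req_winv[of E] nf_req sym by blast
    hence "rnorm E (winv w) \<le> length (winv (nf E w))" unfolding rnorm_def
      by (intro Least_le) blast
    thus ?thesis by (simp add: rnorm_nf winv_def)
  qed
  from *[of w] *[of "winv w"] show ?thesis by simp
qed

lemma red_winv: "red E w \<Longrightarrow> red E (winv w)"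
  using rnorm_winv red_iff by (simp add: winv_def)

lemma front_app: "front E l a \<Longrightarrow> front E l (a @ b)"
  unfolding front_def by (metis append.assoc append_Cons)

lemma red_prefix: "red E (a @ b) \<Longrightarrow> red E a"
  by (induct a) (auto dest: front_app)

lemma set_push: "set (push E l r) \<subseteq> insert l (set r)"
  unfolding push_def using set_remove1_subset[of "linv l" r] by auto

lemma set_nf: "set (nf E w) \<subseteq> set w"
proof (induct w)
  case (Cons l w)
  thus ?case using set_push[of l "nf E w"] by (auto simp: nf_Cons)
qed (simp add: nf_def)

end


fun kpt :: "('v \<Rightarrow> 'v \<Rightarrow> bool) \<Rightarrow> 'v set \<Rightarrow> 'v set \<Rightarrow> 'v letter list \<Rightarrow> 'v letter list" where
  "kpt E K S [] = []"
| "kpt E K S (l # w) = (if fst l \<in> S \<and> (\<forall>k\<in>K. E (fst l) k) then kpt E K S w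
                        else l # kpt E (insert (fst l) K) S w)"

fun strp :: "('v \<Rightarrow> 'v \<Rightarrow> bool) \<Rightarrow> 'v set \<Rightarrow> 'v set \<Rightarrow> 'v letter list \<Rightarrow> 'v letter list" where
  "strp E K S [] = []"
| "strp E K S (l # w) = (if fst l \<in> S \<and> (\<forall>k\<in>K. E (fst l) k) then l # strp E K S w
                        else strp E (insert (fst l) K) S w)"

lemma set_kpt: "set (kpt E K S w) \<subseteq> set w"
  by (induct w arbitrary: K) auto

lemma set_strp: "l \<in> set (strp E K S w) \<Longrightarrow> fst l \<in> S"
  by (induct w arbitrary: K) (auto split: if_splits)

lemma kpt_append: "kpt E K S (a @ b) = kpt E K S a @ kpt E (K \<union> fst ` set (kpt E K S a)) S b"
  by (induct a arbitrary: K) (auto simp: insert_commute)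

lemma kpt_strip_all: "\<forall>l\<in>set g. fst l \<in> S \<Longrightarrow> kpt E {} S (g @ h) = kpt E {} S h"
  by (induct g) auto

context raag begin

lemma kpt_strp_cs: "\<forall>y\<in>set P. fst y \<in> K \<Longrightarrow> cs E (P @ w) (strp E K S w @ P @ kpt E K S w)"
proof (induct w arbitrary: P K)
  case (Cons l w)
  show ?case
  proof (cases "fst l \<in> S \<and> (\<forall>k\<in>K. E (fst l) k)")
    case True
    hence p: "\<forall>y\<in>set P. E (fst l) (fst y)" using Cons.prems by blast
    have "cs E (P @ l # w) (l # P @ w)" using cs_sym[OF cs_move[OF p, of "[]" w]] by simp
    also have "cs E (l # P @ w) (l # strp E K S w @ P @ kpt E K S w)"
      using Cons.hyps[OF Cons.prems] by (rule cs_cons)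
    finally show ?thesis using True by simp
  next
    case False
    have pre: "\<forall>y\<in>set (P @ [l]). fst y \<in> insert (fst l) K" using Cons.prems by auto
    have e1: "strp E K S (l # w) = strp E (insert (fst l) K) S w" by (simp only: strp.simps if_not_P[OF False])
    have e2: "kpt E K S (l # w) = l # kpt E (insert (fst l) K) S w" by (simp only: kpt.simps if_not_P[OF False])
    from Cons.hyps[OF pre] show ?thesis unfolding e1 e2 by simp
  qed
qed simp

lemma kpt_swp: "swp E w1 w2 \<Longrightarrow> set (kpt E K S w1) = set (kpt E K S w2)"
proof (induct rule: swp.induct)
  case (1 a c xs ys)
  have ac: "E (fst c) (fst a)" using 1 sym by blast
  let ?K = "K \<union> fst ` set (kpt E K S xs)"
  have ca: "E (fst a) (fst c)" using 1 by blast
  have e1: "set (kpt E ?K S [a, c]) = set (kpt E ?K S [c, a])"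
    using ac ca by (cases "fst a \<in> S \<and> (\<forall>k\<in>?K. E (fst a) k)";
        cases "fst c \<in> S \<and> (\<forall>k\<in>?K. E (fst c) k)") auto
  have e2: "?K \<union> fst ` set (kpt E ?K S [a, c]) = ?K \<union> fst ` set (kpt E ?K S [c, a])"
    using e1 by simp
  have s1: "kpt E K S (xs @ [a, c] @ ys) = kpt E K S xs @ kpt E ?K S [a, c] @
     kpt E (?K \<union> fst ` set (kpt E ?K S [a, c])) S ys"
    unfolding kpt_append[of E K S xs "[a,c] @ ys"] kpt_append[of E ?K S "[a,c]" ys] by (rule refl)
  have s2: "kpt E K S (xs @ [c, a] @ ys) = kpt E K S xs @ kpt E ?K S [c, a] @
     kpt E (?K \<union> fst ` set (kpt E ?K S [c, a])) S ys"
    unfolding kpt_append[of E K S xs "[c,a] @ ys"] kpt_append[of E ?K S "[c,a]" ys] by (rule refl)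
  show ?case unfolding s1 s2 set_append e1 e2 by (rule refl)
qed

lemma kpt_cs: "cs E w1 w2 \<Longrightarrow> set (kpt E K S w1) = set (kpt E K S w2)"
proof (induct rule: rtranclp_induct)
  case (step y z) thus ?case using kpt_swp[of y z K S] by simp
qed simp

lemma nf_ZZ:
  "\<forall>l\<in>set g. fst l \<in> SV \<Longrightarrow> \<forall>l\<in>set r. fst l \<in> SU \<Longrightarrow>
   \<exists>g2 h2. foldr (push E) g r = g2 @ h2 \<and> (\<forall>l\<in>set g2. fst l \<in> SV) \<and> (\<forall>l\<in>set h2. fst l \<in> SU)"
proof (induct g)
  case Nil thus ?case by (intro exI[of _ "[]"] exI[of _ r]) auto
next
  case (Cons l g)
  then obtain g2 h2 where gh: "foldr (push E) g r = g2 @ h2" "\<forall>l\<in>set g2. fst l \<in> SV" "\<forall>l\<in>set h2. fst l \<in> SU"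
    by auto
  show ?case
  proof (cases "front E (linv l) (g2 @ h2)")
    case True
    hence "push E l (g2 @ h2) = remove1 (linv l) (g2 @ h2)" by (simp add: push_def)
    show ?thesis
    proof (cases "linv l \<in> set g2")
      case True2: True
      have "push E l (foldr (push E) g r) = remove1 (linv l) g2 @ h2"
        using True True2 gh(1) by (simp add: push_def remove1_append)
      moreover have "\<forall>l'\<in>set (remove1 (linv l) g2). fst l' \<in> SV"
        using gh(2) set_remove1_subset[of "linv l" g2] by blast
      ultimately show ?thesis using gh(3) by (metis foldr_Cons o_apply)
    next
      case False
      have "push E l (foldr (push E) g r) = g2 @ remove1 (linv l) h2"
        using True False gh(1) by (simp add: push_def remove1_append)
      moreover have "\<forall>l'\<in>set (remove1 (linv l) h2). fst l' \<in> SU"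
        using gh(3) set_remove1_subset[of "linv l" h2] by blast
      ultimately show ?thesis using gh(2) by (metis foldr_Cons o_apply)
    qed
  next
    case False
    hence "push E l (foldr (push E) g r) = (l # g2) @ h2" using gh(1) by (simp add: push_def)
    moreover have "\<forall>l'\<in>set (l # g2). fst l' \<in> SV" using gh(2) Cons.prems by auto
    ultimately show ?thesis using gh(3) by (metis foldr_Cons o_apply)
  qed
qed

definition st :: "'v \<Rightarrow> 'v set" where "st u = {a. a = u \<or> E u a}"

lemma inZ_red: "red E w \<Longrightarrow> inZ E u w \<longleftrightarrow> (\<forall>l\<in>set w. fst l = u \<or> E u (fst l))"
proof
  assume r: "red E w" and "inZ E u w"
  then obtain g where g: "\<forall>l\<in>set g. fst l = u \<or> E u (fst l)" "req E w g" unfolding inZ_def by blast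
  have "ceq E (nf E w) (nf E g)" using g(2) by (rule req_nf)
  hence "set (nf E w) = set (nf E g)" by (rule ceq_set)
  moreover have "set (nf E w) = set w" using red_ceq_nf[OF r] ceq_set by blast
  ultimately show "\<forall>l\<in>set w. fst l = u \<or> E u (fst l)" using set_nf[of g] g(1) by blast
next
  assume "\<forall>l\<in>set w. fst l = u \<or> E u (fst l)"
  thus "inZ E u w" unfolding inZ_def by (intro exI[of _ w]) simp
qed

lemma inZZ_red: "red E w \<Longrightarrow> inZZ E v u w \<longleftrightarrow> (\<forall>l\<in>set (kpt E {} (st v) w). fst l \<in> st u)"
proof
  assume r: "red E w" and "inZZ E v u w"
  then obtain g h where gh: "\<forall>l\<in>set g. fst l \<in> st v" "\<forall>l\<in>set h. fst l \<in> st u" "req E w (g @ h)"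
    unfolding inZZ_def st_def mem_Collect_eq by blast
  have "\<forall>l\<in>set (nf E h). fst l \<in> st u" using gh(2) set_nf by blast
  then obtain g2 h2 where g2: "foldr (push E) g (nf E h) = g2 @ h2" "\<forall>l\<in>set g2. fst l \<in> st v"
      "\<forall>l\<in>set h2. fst l \<in> st u"
    using nf_ZZ[OF gh(1)] by blast
  have "ceq E (nf E w) (g2 @ h2)" using req_nf[OF gh(3)] g2(1) by (simp add: nf_append)
  hence "ceq E w (g2 @ h2)" using red_ceq_nf[OF r] ceq_trans ceq_sym by blast
  hence "set (kpt E {} (st v) w) = set (kpt E {} (st v) (g2 @ h2))" using ceq_cs kpt_cs by blast
  also have "\<dots> = set (kpt E {} (st v) h2)" using kpt_strip_all[OF g2(2)] by simp
  finally show "\<forall>l\<in>set (kpt E {} (st v) w). fst l \<in> st u" using set_kpt g2(3) by blast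
next
  assume k: "\<forall>l\<in>set (kpt E {} (st v) w). fst l \<in> st u"
  have "cs E w (strp E {} (st v) w @ kpt E {} (st v) w)" using kpt_strp_cs[of "[]" "{}" w "st v"] by simp
  hence "req E w (strp E {} (st v) w @ kpt E {} (st v) w)" by (rule cs_req)
  moreover have "\<forall>l\<in>set (strp E {} (st v) w). fst l = v \<or> E v (fst l)"
    using set_strp unfolding st_def by blast
  moreover have "\<forall>l\<in>set (kpt E {} (st v) w). fst l = u \<or> E u (fst l)"
    using k unfolding st_def by blast
  ultimately show "inZZ E v u w" unfolding inZZ_def by blast
qed

end


inductive ex :: "'v letter list \<Rightarrow> 'v letter list \<Rightarrow> bool" where
  ex_Nil: "ex [] []"
| ex_Cons: "ex w x \<Longrightarrow> 0 < k \<Longrightarrow> ex (l # w) (replicate k l @ x)"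

lemma ex_app: "ex a b \<Longrightarrow> ex c d \<Longrightarrow> ex (a @ c) (b @ d)"
  by (induct rule: ex.induct) (auto intro: ex.intros)

lemma ex_snoc: "ex w x \<Longrightarrow> 0 < k \<Longrightarrow> ex (w @ [l]) (x @ replicate k l)"
  using ex_app[of w x "[l]" "replicate k l"] ex_Cons[OF ex_Nil, of k l] by simp

lemma winv_replicate: "winv (replicate k l) = replicate k (linv l)"
  by (induct k) (auto simp: replicate_append_same)

lemma ex_winv: "ex w x \<Longrightarrow> ex (winv w) (winv x)"
  by (induct rule: ex.induct) (auto intro: ex.intros ex_snoc simp: winv_replicate)

lemma ex_set: "ex w x \<Longrightarrow> set x = set w"
  by (induct rule: ex.induct) auto

lemma ex_concat: "(\<forall>i<length w. 0 < m i) \<Longrightarrow>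
   ex w (concat (map (\<lambda>i. replicate (m i) (w ! i)) [0..<length w]))"
proof (induct w arbitrary: m)
  case Nil thus ?case by (simp add: ex_Nil)
next
  case (Cons l w)
  have "[0..<length (l # w)] = 0 # map Suc [0..<length w]"
    by (simp add: map_Suc_upt upt_conv_Cons del: upt_Suc)
  hence "concat (map (\<lambda>i. replicate (m i) ((l # w) ! i)) [0..<length (l # w)])
     = replicate (m 0) l @ concat (map (\<lambda>i. replicate ((m \<circ> Suc) i) (w ! i)) [0..<length w])"
    by (simp del: upt_Suc add: comp_def)
  moreover have "ex w (concat (map (\<lambda>i. replicate ((m \<circ> Suc) i) (w ! i)) [0..<length w]))"
    using Cons by (intro Cons.hyps) auto
  ultimately show ?case using Cons.prems by (auto intro: ex_Cons)
qed

lemma kpt_rep_strip: "fst l \<in> S \<and> (\<forall>k\<in>K. E (fst l) k) \<Longrightarrow> kpt E K S (replicate n l @ x) = kpt E K S x"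
  by (induct n) auto

context raag begin

lemma kpt_rep_keep: "fst l \<in> K \<Longrightarrow> kpt E K S (replicate n l @ x) = replicate n l @ kpt E K S x"
  using irr by (induct n) (auto simp: insert_absorb)

lemma kpt_ex: "ex w x \<Longrightarrow> set (kpt E K S x) = set (kpt E K S w)"
proof (induct arbitrary: K rule: ex.induct)
  case (ex_Cons w x k l)
  show ?case
  proof (cases "fst l \<in> S \<and> (\<forall>k\<in>K. E (fst l) k)")
    case True thus ?thesis using kpt_rep_strip[of l S K E k x] kpt_rep_strip[of l S K E 1 w] ex_Cons by simp
  next
    case False
    obtain j where k: "k = Suc j" using ex_Cons by (cases k) auto
    have "kpt E K S (replicate k l @ x) = l # kpt E (insert (fst l) K) S (replicate j l @ x)"
      using False k by (simp only: replicate_Suc append_Cons kpt.simps if_not_P[OF False] if_False)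
    also have "\<dots> = l # replicate j l @ kpt E (insert (fst l) K) S x"
      by (simp add: kpt_rep_keep)
    finally show ?thesis using ex_Cons False by (simp only: kpt.simps if_not_P[OF False]) auto
  qed
qed simp

lemma front_Cons_other: "front E m (l # r) \<Longrightarrow> m \<noteq> l \<Longrightarrow> front E m r \<and> E (fst m) (fst l)"
proof -
  assume "front E m (l # r)" "m \<noteq> l"
  then obtain p s where ps: "l # r = p @ m # s" "\<forall>y\<in>set p. E (fst m) (fst y)"
    unfolding front_def by blast
  then obtain p' where "p = l # p'" using \<open>m \<noteq> l\<close> by (cases p) auto
  thus ?thesis using ps unfolding front_def by auto
qed

lemma front_Cons_intro: "front E m r \<Longrightarrow> E (fst m) (fst l) \<Longrightarrow> front E m (l # r)"
proof -
  assume "front E m r" "E (fst m) (fst l)"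
  then obtain p s where ps: "r = p @ m # s" "\<forall>y\<in>set p. E (fst m) (fst y)"
    unfolding front_def by blast
  hence "l # r = (l # p) @ m # s" by simp
  thus ?thesis using ps(2) \<open>E (fst m) (fst l)\<close> unfolding front_def by (metis set_ConsD)
qed

lemma front_rep: "front E m (replicate k l @ x) \<Longrightarrow> m \<noteq> l \<Longrightarrow> front E m x \<and> (0 < k \<longrightarrow> E (fst m) (fst l))"
  by (induct k) (auto dest: front_Cons_other)

lemma front_ex: "ex w x \<Longrightarrow> front E m x \<Longrightarrow> front E m w"
proof (induct rule: ex.induct)
  case (ex_Cons w x k l)
  show ?case
  proof (cases "m = l")
    case True thus ?thesis by simp
  next
    case False
    with front_rep[OF ex_Cons.prems] ex_Cons show ?thesis by (auto intro: front_Cons_intro)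
  qed
qed

lemma front_rep_self: "0 < k \<Longrightarrow> \<not> front E (linv l) (replicate k l @ x)"
  using front_Cons_other[of "linv l" l] irr by (cases k) auto

lemma red_rep: "\<not> front E (linv l) x \<Longrightarrow> red E x \<Longrightarrow> red E (replicate k l @ x)"
proof (induct k)
  case (Suc k)
  thus ?case using front_rep_self[of k l x] by (cases k) auto
qed simp

lemma red_ex: "ex w x \<Longrightarrow> red E w \<Longrightarrow> red E x"
proof (induct rule: ex.induct)
  case (ex_Cons w x k l)
  hence "\<not> front E (linv l) x" "red E x" using front_ex[of w x "linv l"] by auto
  thus ?case by (rule red_rep)
qed simp

end


definition rc :: "('v \<Rightarrow> 'v \<Rightarrow> bool) \<Rightarrow> 'v letter \<Rightarrow> 'v letter list \<Rightarrow> nat" where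
  "rc E l S = (LEAST n. \<exists>x y. (\<forall>l'\<in>set x. E (fst l) (fst l')) \<and>
                      req E S (x @ [l] @ y) \<and> rnorm E y = n)"

lemma rcount_rc: "rcount E w i = rc E (w ! i) (drop i w)"
  unfolding rcount_def rc_def by (rule refl)

lemma rc_req: assumes "req E S S'" shows "rc E l S = rc E l S'"
proof -
  have "\<And>z. req E S z \<longleftrightarrow> req E S' z" using assms req_sym req_trans by metis
  thus ?thesis unfolding rc_def by simp
qed

lemma rc_swap:
  assumes ac: "E (fst a) (fst c)"
  shows "rc E a (a # c # T) = rc E a (a # T)"
proof -
  have sw: "req E (a # c # T) (c # a # T)"
    using rstep_req[OF rstep.comm[of E "fst a" "fst c" "[]" "snd a" "snd c" T]] ac by simp
  have "(\<exists>x y. (\<forall>l'\<in>set x. E (fst a) (fst l')) \<and> req E (a # c # T) (x @ [a] @ y) \<and> rnorm E y = n) \<longleftrightarrow>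
        (\<exists>x y. (\<forall>l'\<in>set x. E (fst a) (fst l')) \<and> req E (a # T) (x @ [a] @ y) \<and> rnorm E y = n)" for n
  proof
    assume "\<exists>x y. (\<forall>l'\<in>set x. E (fst a) (fst l')) \<and> req E (a # c # T) (x @ [a] @ y) \<and> rnorm E y = n"
    then obtain x y where xy: "\<forall>l'\<in>set x. E (fst a) (fst l')" "req E (a # c # T) (x @ [a] @ y)" "rnorm E y = n"
      by blast
    have "req E (a # T) (linv c # c # a # T)" using req_sym[OF req_cancel'] by blast
    also have "req E (linv c # c # a # T) (linv c # (x @ [a] @ y))"
      using req_cons[OF req_trans[OF req_sym[OF sw] xy(2)]] by blast
    finally have "req E (a # T) ((linv c # x) @ [a] @ y)" by simp
    moreover have "\<forall>l'\<in>set (linv c # x). E (fst a) (fst l')" using xy(1) ac by simp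
    ultimately show "\<exists>x y. (\<forall>l'\<in>set x. E (fst a) (fst l')) \<and> req E (a # T) (x @ [a] @ y) \<and> rnorm E y = n"
      using xy(3) by blast
  next
    assume "\<exists>x y. (\<forall>l'\<in>set x. E (fst a) (fst l')) \<and> req E (a # T) (x @ [a] @ y) \<and> rnorm E y = n"
    then obtain x y where xy: "\<forall>l'\<in>set x. E (fst a) (fst l')" "req E (a # T) (x @ [a] @ y)" "rnorm E y = n"
      by blast
    have "req E (a # c # T) ((c # x) @ [a] @ y)" using req_trans[OF sw req_cons[OF xy(2)]] by simp
    moreover have "\<forall>l'\<in>set (c # x). E (fst a) (fst l')" using xy(1) ac by simp
    ultimately show "\<exists>x y. (\<forall>l'\<in>set x. E (fst a) (fst l')) \<and> req E (a # c # T) (x @ [a] @ y) \<and> rnorm E y = n"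
      using xy(3) by blast
  qed
  thus ?thesis unfolding rc_def by simp
qed

definition mlt :: "nat \<Rightarrow> 'v letter \<Rightarrow> nat \<Rightarrow> nat" where
  "mlt M l f = nat \<bar>((3 * lexp l - 1) div 2) * 4 ^ (M - 1 - f)\<bar>"

lemma rpow_blk: "rpow (fst l) (((3 * lexp l - 1) div 2) * 4 ^ k) = replicate (nat \<bar>((3 * lexp l - 1) div 2) * 4 ^ k\<bar>) l"
proof (cases l)
  case (Pair a b)
  have p: "(0::int) < 4 ^ k" by simp
  show ?thesis
  proof (cases b)
    case True
    have "(3 * lexp l - 1) div 2 = 1" using Pair True by (simp add: lexp_def)
    thus ?thesis using Pair True p by (simp add: rpow_def)
  next
    case False
    have "(3 * lexp l - 1) div 2 = -2" using Pair False by (simp add: lexp_def)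
    thus ?thesis using Pair False p by (simp add: rpow_def)
  qed
qed

lemma mlt_pos: "0 < mlt M l f"
proof -
  have p: "(0::int) < 4 ^ (M - 1 - f)" by simp
  have "(3 * lexp l - 1) div 2 = 1 \<or> (3 * lexp l - 1) div 2 = -2" by (simp add: lexp_def)
  thus ?thesis using p unfolding mlt_def by (auto simp: abs_mult)
qed

definition gblk :: "('v \<Rightarrow> 'v \<Rightarrow> bool) \<Rightarrow> nat \<Rightarrow> 'v letter list \<Rightarrow> nat \<Rightarrow> 'v letter list" where
  "gblk E M w i = replicate (mlt M (w ! i) (rc E (w ! i) (drop i w))) (w ! i)"

lemma sigma_word_alt: "sigma_word E M w = concat (map (gblk E M w) [0..<length w])"
  unfolding sigma_word_def gblk_def mlt_def rcount_rc[symmetric] rpow_blk by (rule refl)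

lemma ex_sigma: "ex w (sigma_word E M w)"
  unfolding sigma_word_alt gblk_def by (rule ex_concat) (simp add: mlt_pos)

lemma sigma_word_append: "\<exists>A. sigma_word E M (X @ Q) = A @ sigma_word E M Q \<and> ex X A"
proof -
  have u: "[0..<length (X @ Q)] = [0..<length X] @ map (\<lambda>i. i + length X) [0..<length Q]"
    using upt_add_eq_append[of 0 "length X" "length Q"] by (simp add: map_add_upt add.commute)
  have t: "map (gblk E M (X @ Q)) (map (\<lambda>i. i + length X) [0..<length Q]) = map (gblk E M Q) [0..<length Q]"
    unfolding map_map
  proof (rule map_cong[OF refl])
    fix i assume "i \<in> set [0..<length Q]"
    show "(gblk E M (X @ Q) \<circ> (\<lambda>i. i + length X)) i = gblk E M Q i"
      by (simp add: gblk_def nth_append)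
  qed
  let ?A = "concat (map (gblk E M (X @ Q)) [0..<length X])"
  have h: "?A = concat (map (\<lambda>i. replicate (mlt M (X ! i) (rc E (X ! i) (drop i X @ Q))) (X ! i)) [0..<length X])"
  proof (rule arg_cong[where f=concat], rule map_cong[OF refl])
    fix i assume "i \<in> set [0..<length X]"
    hence "i < length X" by simp
    thus "gblk E M (X @ Q) i = replicate (mlt M (X ! i) (rc E (X ! i) (drop i X @ Q))) (X ! i)"
      by (simp add: gblk_def nth_append)
  qed
  have "ex X ?A" unfolding h by (rule ex_concat) (simp add: mlt_pos)
  moreover have "sigma_word E M (X @ Q) = ?A @ sigma_word E M Q"
    unfolding sigma_word_alt u map_append concat_append t by (rule refl)
  ultimately show ?thesis by blast
qed

context raag begin

lemma cs_rep: "\<forall>y\<in>set p. E (fst l) (fst y) \<Longrightarrow> cs E (replicate k l @ p) (p @ replicate k l)"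
proof (induct k)
  case (Suc k)
  have "cs E (l # replicate k l @ p) (l # p @ replicate k l)" using Suc by (auto intro: cs_cons)
  also have "cs E (l # p @ replicate k l) (p @ l # replicate k l)" using cs_move[OF Suc.prems, of "[]"] by simp
  finally show ?case by simp
qed simp

lemma upt_split3: "length w = n + 2 + k \<Longrightarrow> [0..<length w] = [0..<n] @ [n, Suc n] @ [Suc (Suc n)..<length w]"
proof -
  assume "length w = n + 2 + k"
  hence "[0..<length w] = [0..<n] @ [n..<n + (2 + k)]" using upt_add_eq_append[of 0 n "2+k"] by simp
  also have "[n..<n + (2 + k)] = [n, Suc n] @ [Suc (Suc n)..<length w]"
    using \<open>length w = n + 2 + k\<close> by (simp add: upt_rec)
  finally show ?thesis .
qed

lemma sigma_swp: "swp E w1 w2 \<Longrightarrow> req E (sigma_word E M w1) (sigma_word E M w2)"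
proof (induct rule: swp.induct)
  case (1 a c xs ys)
  let ?w1 = "xs @ [a, c] @ ys" and ?w2 = "xs @ [c, a] @ ys" and ?n = "length xs"
  have ca: "E (fst c) (fst a)" using 1 sym by blast
  have L1: "[0..<length ?w1] = [0..<?n] @ [?n, Suc ?n] @ [Suc (Suc ?n)..<length ?w1]"
    by (rule upt_split3[where k="length ys"]) simp
  have L2: "[0..<length ?w2] = [0..<?n] @ [?n, Suc ?n] @ [Suc (Suc ?n)..<length ?w1]"
  proof -
    have eqlen: "length ?w2 = length ?w1" by simp
    show ?thesis unfolding eqlen by (rule L1)
  qed
  have P: "map (gblk E M ?w1) [0..<?n] = map (gblk E M ?w2) [0..<?n]"
  proof (rule map_cong[OF refl])
    fix i assume "i \<in> set [0..<?n]"
    hence i: "i < ?n" by simp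
    have "req E (drop i xs @ [a, c] @ ys) (drop i xs @ [c, a] @ ys)"
      using rstep_req[OF rstep.comm[of E "fst a" "fst c" "drop i xs" "snd a" "snd c" ys]] 1 by simp
    hence "rc E (xs ! i) (drop i ?w1) = rc E (xs ! i) (drop i ?w2)" using i by (simp add: rc_req)
    thus "gblk E M ?w1 i = gblk E M ?w2 i" using i by (simp add: gblk_def nth_append)
  qed
  have S: "map (gblk E M ?w1) [Suc (Suc ?n)..<length ?w1] = map (gblk E M ?w2) [Suc (Suc ?n)..<length ?w1]"
  proof (rule map_cong[OF refl])
    fix i assume "i \<in> set [Suc (Suc ?n)..<length ?w1]"
    hence i: "Suc (Suc ?n) \<le> i" by (simp del: upt_Suc)
    then obtain j where j: "i = Suc (Suc ?n) + j" by (metis le_add_diff_inverse)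
    show "gblk E M ?w1 i = gblk E M ?w2 i" unfolding gblk_def j by (simp add: nth_append)
  qed
  have B1: "gblk E M ?w1 ?n = gblk E M ?w2 (Suc ?n)"
    using rc_swap[of E a c ys] 1 by (simp add: gblk_def nth_append)
  have B2: "gblk E M ?w1 (Suc ?n) = gblk E M ?w2 ?n"
    using rc_swap[of E c a ys] ca by (simp add: gblk_def nth_append)
  have "cs E (gblk E M ?w1 ?n @ gblk E M ?w1 (Suc ?n)) (gblk E M ?w1 (Suc ?n) @ gblk E M ?w1 ?n)"
    unfolding gblk_def[of E M ?w1 ?n] using 1 by (intro cs_rep) (auto simp: gblk_def nth_append)
  hence "req E (gblk E M ?w1 ?n @ gblk E M ?w1 (Suc ?n)) (gblk E M ?w2 ?n @ gblk E M ?w2 (Suc ?n))"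
    using B1 B2 cs_req by metis
  hence R: "req E (concat (map (gblk E M ?w1) [0..<?n]) @ (gblk E M ?w1 ?n @ gblk E M ?w1 (Suc ?n)) @
      concat (map (gblk E M ?w1) [Suc (Suc ?n)..<length ?w1]))
    (concat (map (gblk E M ?w1) [0..<?n]) @ (gblk E M ?w2 ?n @ gblk E M ?w2 (Suc ?n)) @
      concat (map (gblk E M ?w1) [Suc (Suc ?n)..<length ?w1]))" by (rule req_ctx)
  have e1: "sigma_word E M ?w1 = concat (map (gblk E M ?w1) [0..<?n]) @ (gblk E M ?w1 ?n @ gblk E M ?w1 (Suc ?n)) @
      concat (map (gblk E M ?w1) [Suc (Suc ?n)..<length ?w1])"
    unfolding sigma_word_alt L1 by (simp del: upt_Suc)
  have e2: "sigma_word E M ?w2 = concat (map (gblk E M ?w1) [0..<?n]) @ (gblk E M ?w2 ?n @ gblk E M ?w2 (Suc ?n)) @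
      concat (map (gblk E M ?w1) [Suc (Suc ?n)..<length ?w1])"
    unfolding sigma_word_alt L2 P S by (simp del: upt_Suc)
  show ?case unfolding e1 e2 by (rule R)
qed

lemma sigma_cs: "cs E w1 w2 \<Longrightarrow> req E (sigma_word E M w1) (sigma_word E M w2)"
proof (induct rule: rtranclp_induct)
  case (step y z) thus ?case using sigma_swp req_trans by blast
qed simp

end


lemma req_iff: "req E w w' \<Longrightarrow> req E w z \<longleftrightarrow> req E w' z"
  using req_sym req_trans by metis

lemma inZ_req: assumes "req E w w'" shows "inZ E u w \<longleftrightarrow> inZ E u w'"
proof -
  have "\<And>z. req E w z \<longleftrightarrow> req E w' z" using req_iff[OF assms] by blast
  thus ?thesis unfolding inZ_def by simp
qed

lemma inZZ_req: assumes "req E w w'" shows "inZZ E v u w \<longleftrightarrow> inZZ E v u w'"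
proof -
  have "\<And>z. req E w z \<longleftrightarrow> req E w' z" using req_iff[OF assms] by blast
  thus ?thesis unfolding inZZ_def by simp
qed

context raag begin

lemma no_common:
  "red E X \<Longrightarrow> red E Y \<Longrightarrow> \<not> red E (X @ winv Y) \<Longrightarrow> \<exists>l X1 Y1. cs E X (X1 @ [l]) \<and> cs E Y (Y1 @ [l])"
proof (induct X)
  case Nil thus ?case using red_winv by simp
next
  case (Cons l X0)
  have nf0: "\<not> front E (linv l) X0" and r0: "red E X0" using Cons.prems by auto
  show ?case
  proof (cases "red E (X0 @ winv Y)")
    case False
    then obtain m X1 Y1 where "cs E X0 (X1 @ [m])" "cs E Y (Y1 @ [m])" using Cons.hyps[OF r0 Cons.prems(2) False] by blast
    hence "cs E (l # X0) ((l # X1) @ [m])" "cs E Y (Y1 @ [m])" by (auto intro: cs_cons)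
    thus ?thesis by blast
  next
    case True
    hence "front E (linv l) (X0 @ winv Y)" using Cons.prems by simp
    then obtain p s where ps: "X0 @ winv Y = p @ linv l # s" and p: "\<forall>y\<in>set p. E (fst l) (fst y)"
      unfolding front_def by auto
    have "\<exists>us. p = X0 @ us \<and> winv Y = us @ linv l # s"
    proof -
      have "(\<exists>us. X0 = p @ us \<and> us @ winv Y = linv l # s) \<or> (\<exists>us. p = X0 @ us \<and> winv Y = us @ linv l # s)"
        using ps by (auto simp: append_eq_append_conv2)
      thus ?thesis
      proof
        assume "\<exists>us. X0 = p @ us \<and> us @ winv Y = linv l # s"
        then obtain us where us: "X0 = p @ us" "us @ winv Y = linv l # s" by blast
        show ?thesis
        proof (cases us)
          case Nil thus ?thesis using us by auto
        next
          case (Cons u us')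
          hence "X0 = p @ linv l # us'" using us by auto
          hence "front E (linv l) X0" using p unfolding front_def by auto
          thus ?thesis using nf0 by blast
        qed
      qed
    qed
    then obtain us where us: "p = X0 @ us" "winv Y = us @ linv l # s" by blast
    have X0l: "\<forall>y\<in>set X0. E (fst l) (fst y)" using p us by auto
    have usl: "\<forall>y\<in>set (winv us). E (fst l) (fst y)" using p us by (auto simp: set_winv)
    have "cs E (l # X0) (X0 @ [l])" using X0l by (rule cs_moveR)
    moreover have "Y = winv s @ l # winv us"
      using arg_cong[OF us(2), of winv] by simp
    hence "cs E Y ((winv s @ winv us) @ [l])" using cs_move[OF usl, of "winv s" "[]"] by simp
    ultimately show ?thesis by blast
  qed
qed

lemma decomp:
  "length X = n \<Longrightarrow> red E X \<Longrightarrow> red E Y \<Longrightarrow>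
   \<exists>X' Y' Q. cs E X (X' @ Q) \<and> cs E Y (Y' @ Q) \<and> red E (X' @ winv Y')"
proof (induct n arbitrary: X Y rule: less_induct)
  case (less n)
  show ?case
  proof (cases "red E (X @ winv Y)")
    case True thus ?thesis by (intro exI[of _ X] exI[of _ Y] exI[of _ "[]"]) simp
  next
    case False
    then obtain l X1 Y1 where c: "cs E X (X1 @ [l])" "cs E Y (Y1 @ [l])"
      using no_common[OF less.prems(2,3) False] by blast
    have "red E X1" using red_cs[OF c(1) less.prems(2)] red_prefix by blast
    moreover have "red E Y1" using red_cs[OF c(2) less.prems(3)] red_prefix by blast
    moreover have "length X1 < n" using cs_length[OF c(1)] less.prems(1) by simp
    ultimately obtain X' Y' Q where d: "cs E X1 (X' @ Q)" "cs E Y1 (Y' @ Q)" "red E (X' @ winv Y')"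
      using less.hyps[OF \<open>length X1 < n\<close> refl \<open>red E X1\<close> \<open>red E Y1\<close>] by blast
    have "cs E X (X' @ (Q @ [l]))" using c(1) cs_app[OF d(1), of "[l]" "[l]"] by simp
    moreover have "cs E Y (Y' @ (Q @ [l]))" using c(2) cs_app[OF d(2), of "[l]" "[l]"] by simp
    ultimately show ?thesis using d(3) by blast
  qed
qed

lemma geo_red:
  assumes "req E X x" "length X = rnorm E x"
  shows "red E X"
proof -
  have "ceq E (nf E X) (nf E x)" using assms(1) by (rule req_nf)
  hence "rnorm E X = rnorm E x" using rnorm_nf ceq_length by metis
  thus ?thesis using assms(2) red_iff by simp
qed

lemma some_geo: "req E (SOME w'. req E w' x \<and> length w' = rnorm E x) x \<and>
   length (SOME w'. req E w' x \<and> length w' = rnorm E x) = rnorm E x"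
proof -
  have "req E (nf E x) x \<and> length (nf E x) = rnorm E x" by (simp add: nf_req rnorm_nf)
  thus ?thesis by (rule someI)
qed

end

theorem lemma3p5:
  fixes E :: "'v::finite \<Rightarrow> 'v \<Rightarrow> bool" and M :: nat
    and u v :: 'v and x y :: "'v letter list"
  assumes "\<forall>a b. E a b \<longrightarrow> E b a"
    and "\<forall>a. \<not> E a a"
    and "M > 0"
    and "rnorm E x \<le> M" and "rnorm E y \<le> M"
  shows "(inZ E u (x @ winv y) \<longleftrightarrow> inZ E u (sigma E M x @ winv (sigma E M y))) \<and>
         (inZZ E v u (x @ winv y) \<longleftrightarrow> inZZ E v u (sigma E M x @ winv (sigma E M y)))"
proof -
  interpret raag E using assms(1,2) by unfold_locales blast+
  define X where "X = (SOME w'. req E w' x \<and> length w' = rnorm E x)"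
  define Y where "Y = (SOME w'. req E w' y \<and> length w' = rnorm E y)"
  have hX: "req E X x" "length X = rnorm E x" using some_geo[of x] unfolding X_def by auto
  have hY: "req E Y y" "length Y = rnorm E y" using some_geo[of y] unfolding Y_def by auto
  have rX: "red E X" using geo_red[OF hX] .
  have rY: "red E Y" using geo_red[OF hY] .
  have sx: "sigma E M x = sigma_word E M X" unfolding sigma_def X_def by (rule refl)
  have sy: "sigma E M y = sigma_word E M Y" unfolding sigma_def Y_def by (rule refl)
  obtain X' Y' Q where d: "cs E X (X' @ Q)" "cs E Y (Y' @ Q)" "red E (X' @ winv Y')"
    using decomp[OF refl rX rY] by blast
  let ?W1 = "X' @ winv Y'"
  have "req E (x @ winv y) (X @ winv Y)"
    using req_app[OF req_sym[OF hX(1)] req_winv[OF assms(1) req_sym[OF hY(1)]]] .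
  also have "req E (X @ winv Y) ((X' @ Q) @ winv (Y' @ Q))"
    using req_app[OF cs_req[OF d(1)] req_winv[OF assms(1) cs_req[OF d(2)]]] .
  also have "(X' @ Q) @ winv (Y' @ Q) = X' @ (Q @ winv Q) @ winv Y'" by simp
  also have "req E \<dots> (X' @ [] @ winv Y')" by (rule req_ctx) (rule req_winv_right)
  finally have R1: "req E (x @ winv y) ?W1" by simp
  obtain A where A: "sigma_word E M (X' @ Q) = A @ sigma_word E M Q" "ex X' A"
    using sigma_word_append by blast
  obtain B where B: "sigma_word E M (Y' @ Q) = B @ sigma_word E M Q" "ex Y' B"
    using sigma_word_append by blast
  let ?W2 = "A @ winv B"
  have "req E (sigma E M x @ winv (sigma E M y)) (sigma_word E M (X' @ Q) @ winv (sigma_word E M (Y' @ Q)))"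
    unfolding sx sy using req_app[OF sigma_cs[OF d(1)] req_winv[OF assms(1) sigma_cs[OF d(2)]]] .
  also have "sigma_word E M (X' @ Q) @ winv (sigma_word E M (Y' @ Q)) =
      A @ (sigma_word E M Q @ winv (sigma_word E M Q)) @ winv B" unfolding A B by simp
  also have "req E \<dots> (A @ [] @ winv B)" by (rule req_ctx) (rule req_winv_right)
  finally have R2: "req E (sigma E M x @ winv (sigma E M y)) ?W2" by simp
  have ex12: "ex ?W1 ?W2" using ex_app[OF A(2) ex_winv[OF B(2)]] .
  have r1: "red E ?W1" by (rule d(3))
  have r2: "red E ?W2" using red_ex[OF ex12 r1] .
  have Z: "inZ E u (x @ winv y) \<longleftrightarrow> inZ E u (sigma E M x @ winv (sigma E M y))"
    unfolding inZ_req[OF R1] inZ_req[OF R2] inZ_red[OF r1] inZ_red[OF r2] ex_set[OF ex12] by (rule refl)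
  have ZZ: "inZZ E v u (x @ winv y) \<longleftrightarrow> inZZ E v u (sigma E M x @ winv (sigma E M y))"
    unfolding inZZ_req[OF R1] inZZ_req[OF R2] inZZ_red[OF r1] inZZ_red[OF r2] kpt_ex[OF ex12] by (rule refl)
  show ?thesis using Z ZZ by blast
qed

end
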